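(* Let $G$ be a circle and let $x_1,\dots,x_n,y_1,\dots,y_n\in G$ be arbitrary (not necessarily distinct). Then there exists $i\in\{1,\dots,n\}$ such that $$\sum_{k=1}^n d(x_i,x_k)\le\sum_{k=1}^n d(x_i,y_k).$$
   Context: A circle is a network consisting of a single closed simple curve (e.g. the unit circle $S^1$); $d(x,y)$ denotes the length of the shorter arc between $x$ and $y$. *)

theory Defs
  imports Complex_Main
begin

text \<open>A circle of circumference L > 0 is modelled (up to isometry) by the
  arc-length parametrisation: a point is given by a real coordinate t, and
  coordinates differing by a multiple of L denote the same point.
  circ_dist L x y is the length of the shorter arc between the points with
  coordinates x and y.\<close>

definition circ_dist :: "real \<Rightarrow> real \<Rightarrow> real \<Rightarrow> real" where
  "circ_dist L x y = (let t = L * frac ((x - y) / L) in min t (L - t))"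

end

theory Submission
  imports Defs
begin

definition rr :: "real \<Rightarrow> real \<Rightarrow> real" where
  "rr L v = v - L * of_int \<lfloor>v / L\<rfloor>"

lemma circ_dist_rr: "L > 0 \<Longrightarrow> circ_dist L p z = min (rr L (p - z)) (L - rr L (p - z))"
proof -
  assume L: "L > 0"
  have "L * ((p - z) / L) = p - z" using L by simp
  thus ?thesis unfolding circ_dist_def rr_def frac_def Let_def by (simp add: right_diff_distrib)
qed

lemma rr_bounds: assumes "L > 0" shows "0 \<le> rr L v" "rr L v < L"
proof -
  have a: "of_int \<lfloor>v / L\<rfloor> \<le> v / L" and b: "v / L < of_int \<lfloor>v / L\<rfloor> + 1" by linarith+
  have "of_int \<lfloor>v / L\<rfloor> * L \<le> v" using a pos_le_divide_eq[OF assms] by blast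
  moreover have "v < (of_int \<lfloor>v / L\<rfloor> + 1) * L" using b pos_divide_less_eq[OF assms] by blast
  ultimately show "0 \<le> rr L v" "rr L v < L" unfolding rr_def by (simp_all add: algebra_simps)
qed

lemma rr_shift: assumes "L > 0" shows "rr L (v + L * of_int k) = rr L v"
proof -
  have "(v + L * of_int k) / L = v / L + of_int k" using assms by (simp add: field_simps)
  hence "\<lfloor>(v + L * of_int k) / L\<rfloor> = \<lfloor>v / L\<rfloor> + k" by simp
  thus ?thesis unfolding rr_def by (simp add: algebra_simps)
qed

lemma rr_cong: assumes "L > 0" "a = b + L * of_int k" shows "rr L a = rr L b"
  using rr_shift[OF assms(1)] assms(2) by simp

lemma rr_id: assumes "L > 0" "0 \<le> v" "v < L" shows "rr L v = v"
proof -
  have "\<lfloor>v / L\<rfloor> = 0" using assms by (simp add: floor_eq_iff field_simps)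
  thus ?thesis unfolding rr_def by simp
qed

lemma rr_decomp: "v = rr L v + L * of_int \<lfloor>v / L\<rfloor>"
  unfolding rr_def by simp

lemma circ_dist_rr1: assumes "L > 0" shows "circ_dist L (rr L p) z = circ_dist L p z"
proof -
  have "rr L (rr L p - z) = rr L (p - z)"
    by (rule rr_cong[OF assms, of _ _ "- \<lfloor>p / L\<rfloor>"]) (simp add: rr_def)
  thus ?thesis using assms by (simp add: circ_dist_rr)
qed

lemma circ_dist_perL: assumes "L > 0" shows "circ_dist L (p + L) z = circ_dist L p z"
proof -
  have "rr L (p + L - z) = rr L (p - z)"
    by (rule rr_cong[OF assms, of _ _ 1]) simp
  thus ?thesis using assms by (simp add: circ_dist_rr)
qed

lemma circ_dist_anti: assumes "L > 0" shows "circ_dist L (p + L/2) z = L/2 - circ_dist L p z"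
proof -
  define t where "t = rr L (p - z)"
  have t: "0 \<le> t" "t < L" using rr_bounds[OF assms] t_def by auto
  have dec: "p - z = t + L * of_int \<lfloor>(p - z) / L\<rfloor>" using rr_decomp t_def by simp
  show ?thesis
  proof (cases "t < L/2")
    case True
    have "rr L (p + L/2 - z) = rr L (t + L/2)"
      by (rule rr_cong[OF assms, of _ _ "\<lfloor>(p - z) / L\<rfloor>"]) (use dec in linarith)
    also have "\<dots> = t + L/2" using True t assms by (intro rr_id) auto
    finally show ?thesis using True t assms by (simp add: circ_dist_rr t_def[symmetric])
  next
    case False
    have "rr L (p + L/2 - z) = rr L (t - L/2)"
      by (rule rr_cong[OF assms, of _ _ "\<lfloor>(p - z) / L\<rfloor> + 1"]) (use dec in \<open>simp add: algebra_simps\<close>)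
    also have "\<dots> = t - L/2" using False t assms by (intro rr_id) auto
    finally show ?thesis using False t assms by (simp add: circ_dist_rr t_def[symmetric])
  qed
qed

lemma rr_sub: assumes "L > 0" "0 \<le> a" "a < L" "0 \<le> b" "b < L"
  shows "rr L (a - b) = (if b \<le> a then a - b else a - b + L)"
proof (cases "b \<le> a")
  case True thus ?thesis using assms by (simp add: rr_id)
next
  case False
  have "rr L (a - b) = rr L (a - b + L)" by (rule rr_cong[OF assms(1), of _ _ "-1"]) simp
  also have "\<dots> = a - b + L" using assms False by (intro rr_id) auto
  finally show ?thesis using False by simp
qed

lemma rr_sub_rr: assumes "L > 0" shows "rr L (a - z) = rr L (a - rr L z)"
  by (rule rr_cong[OF assms, of _ _ "- \<lfloor>z / L\<rfloor>"]) (simp add: rr_def)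

lemma rr_half: assumes "L > 0"
  shows "rr L (z + L/2) = (if rr L z < L/2 then rr L z + L/2 else rr L z - L/2)"
proof -
  have b: "0 \<le> rr L z" "rr L z < L" using rr_bounds[OF assms] by auto
  show ?thesis
  proof (cases "rr L z < L/2")
    case True
    have "rr L (z + L/2) = rr L (rr L z + L/2)"
      by (rule rr_cong[OF assms, of _ _ "\<lfloor>z / L\<rfloor>"]) (simp add: rr_def)
    also have "\<dots> = rr L z + L/2" using True b assms by (intro rr_id) auto
    finally show ?thesis using True by simp
  next
    case False
    have "rr L (z + L/2) = rr L (rr L z - L/2)"
      by (rule rr_cong[OF assms, of _ _ "\<lfloor>z / L\<rfloor> + 1"]) (simp add: rr_def algebra_simps)
    also have "\<dots> = rr L z - L/2" using False b assms by (intro rr_id) auto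
    finally show ?thesis using False by simp
  qed
qed

lemma trans_exists:
  fixes A :: "nat \<Rightarrow> bool"
  assumes "A m = A 0" "A J" "\<not> A J'" "J < m" "J' < m"
  shows "\<exists>j<m. A j \<and> \<not> A (Suc j)"
proof (rule ccontr)
  assume "\<not> ?thesis"
  hence step: "\<And>j. j < m \<Longrightarrow> A j \<Longrightarrow> A (Suc j)" by blast
  have up: "J + d \<le> m \<Longrightarrow> A (J + d)" for d
    by (induction d) (use assms step in auto)
  have "A m" using up[of "m - J"] assms by simp
  hence "A 0" using assms by simp
  have "j \<le> m \<Longrightarrow> A j" for j
    by (induction j) (use \<open>A 0\<close> step in auto)
  thus False using assms by simp
qed

lemma sum_split1:
  fixes A s :: "nat \<Rightarrow> real"
  assumes "J1 \<le> J2" "J2 \<le> m" "\<And>j. j < m \<Longrightarrow> s j = (if J1 \<le> j \<and> j < J2 then 1 else -1)"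
  shows "(\<Sum>j<m. s j * (A j - A (Suc j))) = 2 * (A J1 - A J2) - (A 0 - A m)"
proof -
  have "(\<Sum>j<m. s j * (A j - A (Suc j))) =
        (\<Sum>j<m. 2 * (if j \<in> {J1..<J2} then A j - A (Suc j) else 0) - (A j - A (Suc j)))"
    by (rule sum.cong) (auto simp: assms(3))
  also have "\<dots> = 2 * (\<Sum>j<m. (if j \<in> {J1..<J2} then A j - A (Suc j) else 0)) - (\<Sum>j<m. A j - A (Suc j))"
    by (simp add: sum_subtractf sum_distrib_left)
  also have "(\<Sum>j<m. (if j \<in> {J1..<J2} then A j - A (Suc j) else 0)) = (\<Sum>j\<in>{J1..<J2}. A j - A (Suc j))"
    using assms by (subst sum.If_cases) (auto intro!: sum.cong)
  also have "\<dots> = A J1 - A J2"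
    using sum_Suc_diff'[OF assms(1), of "\<lambda>j. - A j"] by (simp add: algebra_simps)
  also have "(\<Sum>j<m. A j - A (Suc j)) = A 0 - A m" by (rule sum_lessThan_telescope')
  finally show ?thesis .
qed

lemma sum_split2:
  fixes A s :: "nat \<Rightarrow> real"
  assumes "J2 \<le> J1" "J1 \<le> m" "\<And>j. j < m \<Longrightarrow> s j = (if J2 \<le> j \<and> j < J1 then -1 else 1)"
  shows "(\<Sum>j<m. s j * (A j - A (Suc j))) = 2 * (A J1 - A J2) + (A 0 - A m)"
proof -
  have "(\<Sum>j<m. s j * (A j - A (Suc j))) = - (\<Sum>j<m. (- s j) * (A j - A (Suc j)))"
    by (simp add: sum_negf)
  also have "(\<Sum>j<m. (- s j) * (A j - A (Suc j))) = 2 * (A J2 - A J1) - (A 0 - A m)"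
    by (rule sum_split1) (use assms in auto)
  finally show ?thesis by simp
qed

theorem theorem3:
  fixes L :: real and n :: nat and x y :: "nat \<Rightarrow> real"
  assumes "L > 0" and "n \<ge> 1"
  shows "\<exists>i\<in>{1..n}. (\<Sum>k=1..n. circ_dist L (x i) (x k)) \<le> (\<Sum>k=1..n. circ_dist L (x i) (y k))"
proof (rule ccontr)
  assume neg: "\<not> ?thesis"
  have L: "L > 0" by fact
  define f where "f p = (\<Sum>k=1..n. circ_dist L p (y k)) - (\<Sum>k=1..n. circ_dist L p (x k))" for p
  have hneg: "f (x i) < 0" if "i \<in> {1..n}" for i using neg that by (auto simp: f_def not_le)
  have f_rr: "f (rr L p) = f p" for p unfolding f_def using circ_dist_rr1[OF L] by simp
  have f_per: "f (p + L) = f p" for p unfolding f_def using circ_dist_perL[OF L] by simp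
  have f_anti: "f (p + L/2) = - f p" for p
    unfolding f_def using circ_dist_anti[OF L] by (simp add: sum_subtractf)
  define S where "S = (\<lambda>k. rr L (x k)) ` {1..n} \<union> (\<lambda>k. rr L (x k + L/2)) ` {1..n}
     \<union> (\<lambda>k. rr L (y k)) ` {1..n} \<union> (\<lambda>k. rr L (y k + L/2)) ` {1..n}"
  have finS: "finite S" unfolding S_def by simp
  have Srange: "0 \<le> s \<and> s < L" if "s \<in> S" for s
    using that rr_bounds[OF L] unfolding S_def by auto
  have n1: "1 \<in> {1..n}" using assms by simp
  have xS: "rr L (x k) \<in> S" "rr L (x k + L/2) \<in> S" if "k \<in> {1..n}" for k
    using that unfolding S_def by auto
  have yS: "rr L (y k) \<in> S" "rr L (y k + L/2) \<in> S" if "k \<in> {1..n}" for k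
    using that unfolding S_def by auto
  define lst where "lst = sorted_list_of_set S"
  define m where "m = length lst"
  have setl: "set lst = S" unfolding lst_def using finS by simp
  have sortl: "sorted_wrt (<) lst" unfolding lst_def by (rule strict_sorted_list_of_set)
  have m0: "0 < m" using xS(1)[OF n1] setl unfolding m_def by (cases lst) auto
  define q where "q j = (if j < m then lst ! j else lst ! 0 + L)" for j
  have qS: "q j \<in> S" if "j < m" for j using that setl unfolding q_def m_def by auto
  have Sq: "\<exists>j<m. q j = s" if "s \<in> S" for s
    using that setl unfolding q_def m_def by (auto simp: in_set_conv_nth)
  have qm: "q m = q 0 + L" unfolding q_def using m0 by simp
  have qmono: "q i < q j" if "i < j" "j \<le> m" for i j
  proof (cases "j < m")
    case True thus ?thesis using that sortl sorted_wrt_nth_less unfolding q_def m_def by fastforce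
  next
    case False
    hence "j = m" using that by simp
    moreover have "q i < L" using Srange[OF qS[of i]] that by simp
    moreover have "0 \<le> q 0" using Srange[OF qS[OF m0]] by simp
    ultimately show ?thesis using qm by simp
  qed
  have qlt: "q i < q j \<longleftrightarrow> i < j" if "i \<le> m" "j \<le> m" for i j
    using qmono that by (metis linorder_neqE_nat order_less_asym order_less_irrefl)
  have qle: "q i \<le> q j \<longleftrightarrow> i \<le> j" if "i \<le> m" "j \<le> m" for i j
    using qlt[OF that(2,1)] by (simp add: not_less[symmetric])
  have gap: "rr L v \<notin> S" if "j < m" "q j < v" "v < q (Suc j)" for j v
  proof
    assume "rr L v \<in> S"
    then obtain i where i: "i < m" "q i = rr L v" using Sq by blast
    show False
    proof (cases "Suc j < m")
      case True
      have "0 \<le> v" "v < L" using Srange[OF qS[OF that(1)]] Srange[OF qS[OF True]] that by auto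
      hence "q i = v" using i rr_id[OF L] by simp
      hence "j < i" "i < Suc j" using qlt[of j i] qlt[of i "Suc j"] that i True by auto
      thus False by simp
    next
      case False
      hence sj: "Suc j = m" using that by simp
      show False
      proof (cases "v < L")
        case True
        have "0 \<le> v" using Srange[OF qS[OF that(1)]] that by auto
        hence "q i = v" using i rr_id[OF L] True by simp
        hence "j < i" using qlt[of j i] that i by auto
        thus False using sj i by simp
      next
        case False
        have "rr L v = rr L (v - L)" by (rule rr_cong[OF L, of _ _ 1]) simp
        also have "\<dots> = v - L" using False that qm sj Srange[OF qS[OF m0]] L by (intro rr_id) auto
        finally have "q i < q 0" using i that sj qm by simp
        thus False using qlt[of i 0] i by simp
      qed
    qed
  qed
  define sg where "sg z j = (if rr L (q j - z) < L/2 then 1 else (-1::real))" for z j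
  have seg: "circ_dist L (q (Suc j)) z - circ_dist L (q j) z = sg z j * (q (Suc j) - q j)"
    if zS: "rr L z \<in> S" "rr L (z + L/2) \<in> S" and j: "j < m" for z j
  proof -
    define t where "t = rr L (q j - z)"
    define D where "D = q (Suc j) - q j"
    have D: "D > 0" unfolding D_def using qmono[of j "Suc j"] j by simp
    have t: "0 \<le> t" "t < L" using rr_bounds[OF L] t_def by auto
    define k where "k = \<lfloor>(q j - z) / L\<rfloor>"
    have dec: "q j - z = t + L * of_int k" using rr_decomp t_def k_def by simp
    have qs: "q (Suc j) = q j + D" unfolding D_def by simp
    show ?thesis
    proof (cases "t < L/2")
      case True
      have "t + D \<le> L/2"
      proof (rule ccontr)
        assume "\<not> ?thesis"
        define v where "v = q j + (L/2 - t)"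
        have "q j < v" "v < q (Suc j)" using True \<open>\<not> t + D \<le> L/2\<close> qs unfolding v_def by auto
        moreover have "rr L v = rr L (z + L/2)"
          by (rule rr_cong[OF L, of _ _ k]) (use dec in \<open>simp add: v_def algebra_simps\<close>)
        ultimately show False using gap[OF j] zS by metis
      qed
      have "rr L (q (Suc j) - z) = rr L (t + D)"
        by (rule rr_cong[OF L, of _ _ k]) (use dec qs in \<open>simp add: algebra_simps\<close>)
      also have "\<dots> = t + D" using t D \<open>t + D \<le> L/2\<close> L by (intro rr_id) auto
      finally show ?thesis using True t D \<open>t + D \<le> L/2\<close> L
        by (simp add: circ_dist_rr sg_def t_def[symmetric] D_def[symmetric])
    next
      case False
      have tD: "t + D \<le> L"
      proof (rule ccontr)
        assume "\<not> ?thesis"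
        define v where "v = q j + (L - t)"
        have "q j < v" "v < q (Suc j)" using t \<open>\<not> t + D \<le> L\<close> qs unfolding v_def by auto
        moreover have "rr L v = rr L z"
          by (rule rr_cong[OF L, of _ _ "k + 1"]) (use dec in \<open>simp add: v_def algebra_simps\<close>)
        ultimately show False using gap[OF j] zS by metis
      qed
      show ?thesis
      proof (cases "t + D < L")
        case True
        have "rr L (q (Suc j) - z) = rr L (t + D)"
          by (rule rr_cong[OF L, of _ _ k]) (use dec qs in \<open>simp add: algebra_simps\<close>)
        also have "\<dots> = t + D" using t D True L by (intro rr_id) auto
        finally show ?thesis using False t D True L
          by (simp add: circ_dist_rr sg_def t_def[symmetric] D_def[symmetric])
      next
        case False2: False
        hence "t + D = L" using tD by simp
        have "rr L (q (Suc j) - z) = rr L 0"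
          by (rule rr_cong[OF L, of _ _ "k + 1"]) (use dec qs \<open>t + D = L\<close> in \<open>simp add: algebra_simps\<close>)
        also have "\<dots> = 0" using L by (intro rr_id) auto
        finally show ?thesis using False t D \<open>t + D = L\<close> L
          by (simp add: circ_dist_rr sg_def t_def[symmetric] D_def[symmetric])
      qed
    qed
  qed
  define Sl where "Sl j = (\<Sum>k=1..n. sg (y k) j - sg (x k) j)" for j
  have slope: "f (q (Suc j)) - f (q j) = Sl j * (q (Suc j) - q j)" if j: "j < m" for j
  proof -
    have "f (q (Suc j)) - f (q j) =
      (\<Sum>k=1..n. circ_dist L (q (Suc j)) (y k) - circ_dist L (q j) (y k))
      - (\<Sum>k=1..n. circ_dist L (q (Suc j)) (x k) - circ_dist L (q j) (x k))"
      unfolding f_def by (simp add: sum_subtractf)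
    also have "\<dots> = (\<Sum>k=1..n. sg (y k) j * (q (Suc j) - q j)) - (\<Sum>k=1..n. sg (x k) j * (q (Suc j) - q j))"
    proof -
      have hy: "circ_dist L (q (Suc j)) (y k) - circ_dist L (q j) (y k) = sg (y k) j * (q (Suc j) - q j)"
        if "k \<in> {1..n}" for k using seg[OF yS(1)[OF that] yS(2)[OF that] j] .
      have hx: "circ_dist L (q (Suc j)) (x k) - circ_dist L (q j) (x k) = sg (x k) j * (q (Suc j) - q j)"
        if "k \<in> {1..n}" for k using seg[OF xS(1)[OF that] xS(2)[OF that] j] .
      show ?thesis using sum.cong[OF refl hy, of "{1..n}"] sum.cong[OF refl hx, of "{1..n}"] by simp
    qed
    also have "\<dots> = Sl j * (q (Suc j) - q j)"
      unfolding Sl_def by (simp add: sum_subtractf sum_distrib_right left_diff_distrib)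
    finally show ?thesis .
  qed
  define A where "A j = (if f (q j) < 0 then 1 else (0::real))" for j
  have Am: "A m = A 0" unfolding A_def qm f_per by simp
  have sgsum: "(\<Sum>j<m. sg z j * (A j - A (Suc j))) =
      2 * ((if f z < 0 then 1 else 0) - (if f (z + L/2) < 0 then 1 else 0))"
    if zS: "rr L z \<in> S" "rr L (z + L/2) \<in> S" for z
  proof -
    obtain J1 where J1: "J1 < m" "q J1 = rr L z" using Sq zS by blast
    obtain J2 where J2: "J2 < m" "q J2 = rr L (z + L/2)" using Sq zS by blast
    have AJ: "A J1 = (if f z < 0 then 1 else 0)" "A J2 = (if f (z + L/2) < 0 then 1 else 0)"
      unfolding A_def J1 J2 f_rr by simp_all
    have rz: "0 \<le> rr L z" "rr L z < L" using rr_bounds[OF L] by auto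
    have rq: "rr L (q j - z) = (if rr L z \<le> q j then q j - rr L z else q j - rr L z + L)" if "j < m" for j
      using rr_sub_rr[OF L, of "q j" z] rr_sub[OF L _ _ rz, of "q j"] Srange[OF qS[OF that]] by simp
    show ?thesis
    proof (cases "rr L z < L/2")
      case True
      have h: "rr L (z + L/2) = rr L z + L/2" using rr_half[OF L] True by simp
      have "J1 < J2" using qlt[of J1 J2] J1 J2 h L by simp
      have "(\<Sum>j<m. sg z j * (A j - A (Suc j))) = 2 * (A J1 - A J2) - (A 0 - A m)"
      proof (rule sum_split1)
        show "J1 \<le> J2" "J2 \<le> m" using \<open>J1 < J2\<close> J2 by auto
        fix j assume "j < m"
        show "sg z j = (if J1 \<le> j \<and> j < J2 then 1 else -1)"
          using rq[OF \<open>j<m\<close>] qle[of J1 j] qlt[of j J2] J1 J2 h \<open>j < m\<close> True rz Srange[OF qS[OF \<open>j<m\<close>]]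
          unfolding sg_def by auto
      qed
      thus ?thesis using Am AJ by simp
    next
      case False
      have h: "rr L (z + L/2) = rr L z - L/2" using rr_half[OF L] False by simp
      have "J2 < J1" using qlt[of J2 J1] J1 J2 h L by simp
      have "(\<Sum>j<m. sg z j * (A j - A (Suc j))) = 2 * (A J1 - A J2) + (A 0 - A m)"
      proof (rule sum_split2)
        show "J2 \<le> J1" "J1 \<le> m" using \<open>J2 < J1\<close> J1 by auto
        fix j assume "j < m"
        show "sg z j = (if J2 \<le> j \<and> j < J1 then -1 else 1)"
          using rq[OF \<open>j<m\<close>] qlt[of j J1] qle[of J2 j] J1 J2 h \<open>j < m\<close> False rz Srange[OF qS[OF \<open>j<m\<close>]]
          unfolding sg_def by auto
      qed
      thus ?thesis using Am AJ by simp
    qed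
  qed
  define T where "T = (\<Sum>j<m. Sl j * (A j - A (Suc j)))"
  have "T = (\<Sum>k=1..n. (\<Sum>j<m. sg (y k) j * (A j - A (Suc j))) - (\<Sum>j<m. sg (x k) j * (A j - A (Suc j))))"
    unfolding T_def Sl_def by (simp add: sum_distrib_right left_diff_distrib sum_subtractf sum.swap[of _ "{..<m}"])
  also have "\<dots> = (\<Sum>k=1..n. 2 * ((if f (y k) < 0 then 1 else 0) - (if f (y k + L/2) < 0 then 1 else 0)) - 2)"
  proof (rule sum.cong)
    fix k assume k: "k \<in> {1..n}"
    have "f (x k + L/2) > 0" using f_anti hneg[OF k] by simp
    thus "(\<Sum>j<m. sg (y k) j * (A j - A (Suc j))) - (\<Sum>j<m. sg (x k) j * (A j - A (Suc j))) =
      2 * ((if f (y k) < 0 then 1 else 0) - (if f (y k + L/2) < 0 then 1 else 0)) - 2"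
      using sgsum[OF xS(1)[OF k] xS(2)[OF k]] sgsum[OF yS(1)[OF k] yS(2)[OF k]] hneg[OF k] by simp
  qed simp
  also have "\<dots> \<le> 0" by (intro sum_nonpos) auto
  finally have Tle: "T \<le> 0" .
  obtain J where J: "J < m" "q J = rr L (x 1)" using Sq xS(1)[OF n1] by blast
  obtain J' where J': "J' < m" "q J' = rr L (x 1 + L/2)" using Sq xS(2)[OF n1] by blast
  have "\<exists>j<m. f (q j) < 0 \<and> \<not> f (q (Suc j)) < 0"
  proof (rule trans_exists[of "\<lambda>j. f (q j) < 0" m J J'])
    show "(f (q m) < 0) = (f (q 0) < 0)" using qm f_per by simp
    show "f (q J) < 0" using J f_rr hneg[OF n1] by simp
    show "\<not> f (q J') < 0" using J' f_rr f_anti hneg[OF n1] by simp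
  qed (use J J' in auto)
  then obtain j0 where j0: "j0 < m" "f (q j0) < 0" "\<not> f (q (Suc j0)) < 0" by blast
  have nn: "0 \<le> Sl j * (A j - A (Suc j))" if "j \<in> {..<m}" for j
  proof -
    have jm: "j < m" using that by simp
    have D: "q (Suc j) - q j > 0" using qmono[of j "Suc j"] jm by simp
    have e: "f (q (Suc j)) - f (q j) = Sl j * (q (Suc j) - q j)" using slope[OF jm] .
    have p1: "Sl j > 0" if "f (q j) < 0" "\<not> f (q (Suc j)) < 0"
    proof -
      have "Sl j * (q (Suc j) - q j) > 0" using e that by linarith
      thus ?thesis using D by (simp add: zero_less_mult_iff)
    qed
    have p2: "Sl j < 0" if "\<not> f (q j) < 0" "f (q (Suc j)) < 0"
    proof -
      have "Sl j * (q (Suc j) - q j) < 0" using e that by linarith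
      thus ?thesis using D by (simp add: mult_less_0_iff)
    qed
    show ?thesis unfolding A_def using p1 p2 by auto
  qed
  have "0 < Sl j0 * (A j0 - A (Suc j0))"
  proof -
    have D: "q (Suc j0) - q j0 > 0" using qmono[of j0 "Suc j0"] j0 by simp
    have "Sl j0 * (q (Suc j0) - q j0) > 0" using slope[OF j0(1)] j0 by linarith
    hence "Sl j0 > 0" using D by (simp add: zero_less_mult_iff)
    thus ?thesis using j0 unfolding A_def by simp
  qed
  hence "0 < T" unfolding T_def using j0 nn by (intro sum_pos2[of "{..<m}" j0]) auto
  thus False using Tle by simp
qed

end
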